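(* Let $X,Y$ be random vectors in $\mathbb{R}^m,\mathbb{R}^n$, $\mu,\nu$ finite symmetric Lévy measures on $\mathbb{R}^m\setminus\{0\}$, $\mathbb{R}^n\setminus\{0\}$ with full support, $\Phi(x)=\int(1-\cos\langle x,s\rangle)\mu(ds)$, $\Psi(y)=\int(1-\cos\langle y,t\rangle)\nu(dt)$, and let $(X_i,Y_i)$, $i=1,\dots,4$, be i.i.d. copies of $(X,Y)$. Then \begin{align*} V^2(X,Y)&=\mathbb{E}\Phi(X_1-X_4)\Psi(Y_1-Y_4)-2\mathbb{E}\Phi(X_1-X_2)\Psi(Y_1-Y_3)+\mathbb{E}\Phi(X_1-X_2)\,\mathbb{E}\Psi(Y_3-Y_4)\\ &=\mathbb{E}\big[\Phi(X_1-X_4)\{\Psi(Y_1-Y_4)-2\Psi(Y_1-Y_3)+\Psi(Y_2-Y_3)\}\big]\\ &=\mathbb{E}\big[\{\Phi(X_1-X_4)-\Phi(X_4-X_2)\}\{\Psi(Y_4-Y_1)-\Psi(Y_1-Y_3)\}\big]\\ &=\mathbb{E}\big[\{\Phi(X_1-X_4)-\mathbb{E}(\Phi(X_4-X_1)\mid X_4)\}\{\Psi(Y_4-Y_1)-\mathbb{E}(\Psi(Y_1-Y_4)\mid Y_1)\}\big]. \end{align*}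
   Context: Symmetric Lévy measure on $\mathbb{R}^d\setminus\{0\}$: $\rho(B)=\rho(-B)$ and $\int(1\wedge|r|^2)\rho(dr)<\infty$; full support: positive mass on every nonempty open subset. $V^2(X,Y)=\iint|f_{(X,Y)}(s,t)-f_X(s)f_Y(t)|^2\,\mu(ds)\,\nu(dt)$, $f$ denoting characteristic functions. *)

theory Defs
  imports "HOL-Probability.Probability"
begin

definition finite_sym_levy_full :: "('d::euclidean_space) measure \<Rightarrow> bool" where
  "finite_sym_levy_full \<rho> \<longleftrightarrow>
     sets \<rho> = sets borel \<and>
     finite_measure \<rho> \<and>
     emeasure \<rho> {0} = 0 \<and>
     (\<forall>B\<in>sets borel. emeasure \<rho> B = emeasure \<rho> (uminus ` B)) \<and>
     (\<integral>\<^sup>+ r. ennreal (min 1 (norm r ^ 2)) \<partial>\<rho>) < \<infinity> \<and>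
     (\<forall>U. open U \<and> U \<noteq> {} \<and> 0 \<notin> U \<longrightarrow> emeasure \<rho> U > 0)"

definition char_fn :: "'w measure \<Rightarrow> ('w \<Rightarrow> 'd::euclidean_space) \<Rightarrow> 'd \<Rightarrow> complex" where
  "char_fn M X s = (\<integral>\<omega>. cis (s \<bullet> X \<omega>) \<partial>M)"

definition joint_char_fn :: "'w measure \<Rightarrow> ('w \<Rightarrow> 'a::euclidean_space) \<Rightarrow> ('w \<Rightarrow> 'b::euclidean_space)
     \<Rightarrow> 'a \<Rightarrow> 'b \<Rightarrow> complex" where
  "joint_char_fn M X Y s t = (\<integral>\<omega>. cis (s \<bullet> X \<omega> + t \<bullet> Y \<omega>) \<partial>M)"

definition dcov2 :: "'a measure \<Rightarrow> 'b measure \<Rightarrow> 'w measure \<Rightarrow> ('w \<Rightarrow> 'a::euclidean_space)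
     \<Rightarrow> ('w \<Rightarrow> 'b::euclidean_space) \<Rightarrow> real" where
  "dcov2 \<mu> \<nu> M X Y = (\<integral>(s,t). (cmod (joint_char_fn M X Y s t - char_fn M X s * char_fn M Y t))^2 \<partial>(\<mu> \<Otimes>\<^sub>M \<nu>))"

definition levy_cf_exp :: "'d measure \<Rightarrow> 'd::euclidean_space \<Rightarrow> real" where
  "levy_cf_exp \<mu> x = (\<integral>s. 1 - cos (x \<bullet> s) \<partial>\<mu>)"

end

theory Submission imports Defs begin

lemma lv_basic:
  assumes "finite_sym_levy_full (\<rho>::'d::euclidean_space measure)"
  shows "finite_measure \<rho>" "sets \<rho> = sets borel" "space \<rho> = UNIV"
    "borel_measurable \<rho> = borel_measurable borel"
proof -
  show s: "sets \<rho> = sets borel" "finite_measure \<rho>" using assms unfolding finite_sym_levy_full_def by blast+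
  show "space \<rho> = UNIV" using sets_eq_imp_space_eq[OF s(1)] by simp
  show "borel_measurable \<rho> = borel_measurable borel" by (rule measurable_cong_sets[OF s(1) refl])
qed

lemma lv_meas_cos:
  assumes "finite_sym_levy_full (\<rho>::'d::euclidean_space measure)"
  shows "(\<lambda>s. cos (x \<bullet> s)) \<in> borel_measurable \<rho>" "(\<lambda>s. sin (x \<bullet> s)) \<in> borel_measurable \<rho>"
proof -
  have "(\<lambda>s. cos (x \<bullet> s)) \<in> borel_measurable borel" "(\<lambda>s. sin (x \<bullet> s)) \<in> borel_measurable borel"
    by measurable
  then show "(\<lambda>s. cos (x \<bullet> s)) \<in> borel_measurable \<rho>" "(\<lambda>s. sin (x \<bullet> s)) \<in> borel_measurable \<rho>"
    unfolding lv_basic(4)[OF assms] .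
qed

lemma lv_int_bound:
  assumes "finite_sym_levy_full (\<rho>::'d::euclidean_space measure)"
    and "f \<in> borel_measurable borel" and "\<And>s. \<bar>f s\<bar> \<le> B"
  shows "integrable \<rho> (f::'d \<Rightarrow> real)"
proof -
  interpret finite_measure \<rho> using lv_basic[OF assms(1)] by simp
  show ?thesis
    by (rule integrable_const_bound[where B=B]) (use assms lv_basic[OF assms(1)] in auto)
qed

lemma lv_sym:
  assumes "finite_sym_levy_full (\<rho>::'d::euclidean_space measure)"
  shows "distr \<rho> borel uminus = \<rho>"
proof (rule measure_eqI)
  note b = lv_basic[OF assms]
  show "sets (distr \<rho> borel uminus) = sets \<rho>" using b by simp
  fix A assume "A \<in> sets (distr \<rho> borel uminus)"
  then have A: "A \<in> sets borel" by simp
  have um: "uminus \<in> measurable \<rho> borel" using b by simp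
  have "emeasure (distr \<rho> borel uminus) A = emeasure \<rho> (uminus -` A \<inter> space \<rho>)"
    by (rule emeasure_distr[OF um A])
  also have "uminus -` A \<inter> space \<rho> = uminus ` A"
  proof (intro equalityI subsetI)
    fix y assume "y \<in> uminus -` A \<inter> space \<rho>"
    then have "- y \<in> A" by simp
    then show "y \<in> uminus ` A" by (rule rev_image_eqI) simp
  next
    fix y assume "y \<in> uminus ` A" then show "y \<in> uminus -` A \<inter> space \<rho>" using b by auto
  qed
  also have "emeasure \<rho> (uminus ` A) = emeasure \<rho> A"
    using assms A unfolding finite_sym_levy_full_def by metis
  finally show "emeasure (distr \<rho> borel uminus) A = emeasure \<rho> A" .
qed

lemma lv_sin:
  assumes "finite_sym_levy_full (\<rho>::'d::euclidean_space measure)"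
  shows "(\<integral>s. sin (x \<bullet> s) \<partial>\<rho>) = 0"
proof -
  note b = lv_basic[OF assms]
  have "(\<integral>s. sin (x \<bullet> s) \<partial>\<rho>) = (\<integral>s. sin (x \<bullet> s) \<partial>(distr \<rho> borel uminus))"
    using lv_sym[OF assms] by simp
  also have "\<dots> = (\<integral>s. sin (x \<bullet> (- s)) \<partial>\<rho>)"
    by (rule integral_distr) (use b in auto)
  also have "\<dots> = - (\<integral>s. sin (x \<bullet> s) \<partial>\<rho>)" by simp
  finally show ?thesis by simp
qed

lemma lv_cos:
  assumes "finite_sym_levy_full (\<rho>::'d::euclidean_space measure)"
  shows "levy_cf_exp \<rho> x = measure \<rho> UNIV - (\<integral>s. cos (x \<bullet> s) \<partial>\<rho>)"
proof -
  note b = lv_basic[OF assms]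
  interpret finite_measure \<rho> using b by simp
  have i: "integrable \<rho> (\<lambda>s. cos (x \<bullet> s))"
    by (rule lv_int_bound[OF assms, where B=1]) auto
  show ?thesis unfolding levy_cf_exp_def
    using Bochner_Integration.integral_diff[OF integrable_const i, of 1] b by simp
qed

lemma lv_meas:
  assumes "finite_sym_levy_full (\<rho>::'d::euclidean_space measure)"
  shows "levy_cf_exp \<rho> \<in> borel_measurable borel"
proof -
  note b = lv_basic[OF assms]
  interpret finite_measure \<rho> using b by simp
  have eq: "borel_measurable (borel \<Otimes>\<^sub>M \<rho>) = borel_measurable (borel \<Otimes>\<^sub>M (borel::'d measure))"
    by (rule measurable_cong_sets) (simp_all add: b)
  have "(\<lambda>(x, s). 1 - cos (x \<bullet> s)) \<in> borel_measurable (borel \<Otimes>\<^sub>M \<rho>)"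
    unfolding eq by measurable
  from borel_measurable_lebesgue_integral[OF this] show ?thesis
    unfolding levy_cf_exp_def[abs_def] by simp
qed

lemma lv_bounds:
  assumes "finite_sym_levy_full (\<rho>::'d::euclidean_space measure)"
  shows "0 \<le> levy_cf_exp \<rho> x" "levy_cf_exp \<rho> x \<le> 2 * measure \<rho> UNIV"
proof -
  note b = lv_basic[OF assms]
  interpret finite_measure \<rho> using b by simp
  show "0 \<le> levy_cf_exp \<rho> x" unfolding levy_cf_exp_def by (rule integral_nonneg_AE) auto
  have i: "integrable \<rho> (\<lambda>s. cos (x \<bullet> s))"
    by (rule lv_int_bound[OF assms, where B=1]) auto
  have "- measure \<rho> UNIV \<le> (\<integral>s. cos (x \<bullet> s) \<partial>\<rho>)"
    using Bochner_Integration.integral_mono[OF integrable_const i, of "-1"] b by simp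
  then show "levy_cf_exp \<rho> x \<le> 2 * measure \<rho> UNIV" using lv_cos[OF assms, of x] by linarith
qed

lemma lv_even:
  assumes "finite_sym_levy_full (\<rho>::'d::euclidean_space measure)"
  shows "levy_cf_exp \<rho> (- x) = levy_cf_exp \<rho> x"
  unfolding levy_cf_exp_def by simp

lemma lv_even':
  assumes "finite_sym_levy_full (\<rho>::'d::euclidean_space measure)"
  shows "levy_cf_exp \<rho> (a - b) = levy_cf_exp \<rho> (b - a)"
  using lv_even[OF assms, of "a - b"] by simp


lemma prod_int:
  fixes f :: "'a \<Rightarrow> real" and g :: "'b \<Rightarrow> real"
  assumes A: "finite_measure A" and B: "finite_measure B"
    and f: "f \<in> borel_measurable A" and g: "g \<in> borel_measurable B"
    and fb: "\<And>x. \<bar>f x\<bar> \<le> c1" and gb: "\<And>x. \<bar>g x\<bar> \<le> c2"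
  shows "integrable (A \<Otimes>\<^sub>M B) (\<lambda>p. f (fst p) * g (snd p))"
    "(\<integral>p. f (fst p) * g (snd p) \<partial>(A \<Otimes>\<^sub>M B)) = (\<integral>x. f x \<partial>A) * (\<integral>y. g y \<partial>B)"
proof -
  interpret A: finite_measure A by fact
  interpret B: finite_measure B by fact
  interpret P: pair_sigma_finite A B by unfold_locales
  interpret AB: finite_measure "A \<Otimes>\<^sub>M B" by (rule finite_measure_pair_measure[OF B A])
  show i: "integrable (A \<Otimes>\<^sub>M B) (\<lambda>p. f (fst p) * g (snd p))"
  proof (rule AB.integrable_const_bound[where B="c1 * c2"])
    show "AE x in A \<Otimes>\<^sub>M B. norm (f (fst x) * g (snd x)) \<le> c1 * c2"
    proof (rule AE_I2)
      fix x
      have "\<bar>f (fst x)\<bar> * \<bar>g (snd x)\<bar> \<le> c1 * c2"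
        by (rule mult_mono[OF fb gb]) (use order_trans[OF abs_ge_zero fb] in auto)
      then show "norm (f (fst x) * g (snd x)) \<le> c1 * c2" by (simp add: abs_mult)
    qed
    show "(\<lambda>p. f (fst p) * g (snd p)) \<in> borel_measurable (A \<Otimes>\<^sub>M B)"
      using f g by measurable
  qed
  have "(\<integral>p. f (fst p) * g (snd p) \<partial>(A \<Otimes>\<^sub>M B)) = (\<integral>x. \<integral>y. f x * g y \<partial>B \<partial>A)"
    using P.integral_fst'[OF i] by simp
  also have "\<dots> = (\<integral>x. f x * (\<integral>y. g y \<partial>B) \<partial>A)" by simp
  also have "\<dots> = (\<integral>x. f x \<partial>A) * (\<integral>y. g y \<partial>B)" by simp
  finally show "(\<integral>p. f (fst p) * g (snd p) \<partial>(A \<Otimes>\<^sub>M B)) = (\<integral>x. f x \<partial>A) * (\<integral>y. g y \<partial>B)" .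
qed

lemma lemmaP:
  fixes \<mu> :: "('m::euclidean_space) measure" and \<nu> :: "('n::euclidean_space) measure"
  assumes mu: "finite_sym_levy_full \<mu>" and nu: "finite_sym_levy_full \<nu>"
  shows "integrable (\<mu> \<Otimes>\<^sub>M \<nu>) (\<lambda>p. cos (fst p \<bullet> a + snd p \<bullet> b))"
    "(\<integral>p. cos (fst p \<bullet> a + snd p \<bullet> b) \<partial>(\<mu> \<Otimes>\<^sub>M \<nu>)) =
       (measure \<mu> UNIV - levy_cf_exp \<mu> a) * (measure \<nu> UNIV - levy_cf_exp \<nu> b)"
proof -
  note bm = lv_basic[OF mu] and bn = lv_basic[OF nu]
  have eq: "\<And>p. cos (fst p \<bullet> a + snd p \<bullet> b) = cos (a \<bullet> fst p) * cos (b \<bullet> snd p) - sin (a \<bullet> fst p) * sin (b \<bullet> snd p)"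
    by (simp add: cos_add inner_commute)
  note c = prod_int[OF bm(1) bn(1) lv_meas_cos(1)[OF mu, of a] lv_meas_cos(1)[OF nu, of b], where ?c1.0=1 and ?c2.0=1]
  note s = prod_int[OF bm(1) bn(1) lv_meas_cos(2)[OF mu, of a] lv_meas_cos(2)[OF nu, of b], where ?c1.0=1 and ?c2.0=1]
  show "integrable (\<mu> \<Otimes>\<^sub>M \<nu>) (\<lambda>p. cos (fst p \<bullet> a + snd p \<bullet> b))"
    unfolding eq using c(1) s(1) by auto
  have "(\<integral>p. cos (fst p \<bullet> a + snd p \<bullet> b) \<partial>(\<mu> \<Otimes>\<^sub>M \<nu>)) =
     (\<integral>s. cos (a \<bullet> s) \<partial>\<mu>) * (\<integral>t. cos (b \<bullet> t) \<partial>\<nu>) - (\<integral>s. sin (a \<bullet> s) \<partial>\<mu>) * (\<integral>t. sin (b \<bullet> t) \<partial>\<nu>)"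
    unfolding eq using c s by (subst Bochner_Integration.integral_diff) auto
  also have "\<dots> = (measure \<mu> UNIV - levy_cf_exp \<mu> a) * (measure \<nu> UNIV - levy_cf_exp \<nu> b)"
    using lv_sin[OF mu] lv_cos[OF mu] lv_cos[OF nu] by simp
  finally show "(\<integral>p. cos (fst p \<bullet> a + snd p \<bullet> b) \<partial>(\<mu> \<Otimes>\<^sub>M \<nu>)) =
       (measure \<mu> UNIV - levy_cf_exp \<mu> a) * (measure \<nu> UNIV - levy_cf_exp \<nu> b)" .
qed


lemma lambda0:
  fixes \<mu> :: "('m::euclidean_space) measure" and \<nu> :: "('n::euclidean_space) measure"
    and A :: "'w \<Rightarrow> 'm" and B :: "'w \<Rightarrow> 'n"
  assumes mu: "finite_sym_levy_full \<mu>" and nu: "finite_sym_levy_full \<nu>"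
    and P: "prob_space M" and A[measurable]: "A \<in> borel_measurable M" and B[measurable]: "B \<in> borel_measurable M"
  shows "integrable (\<mu> \<Otimes>\<^sub>M \<nu>) (\<lambda>p. \<integral>\<omega>. cos (fst p \<bullet> A \<omega> + snd p \<bullet> B \<omega>) \<partial>M)"
    "(\<integral>p. (\<integral>\<omega>. cos (fst p \<bullet> A \<omega> + snd p \<bullet> B \<omega>) \<partial>M) \<partial>(\<mu> \<Otimes>\<^sub>M \<nu>)) =
     (\<integral>\<omega>. (measure \<mu> UNIV - levy_cf_exp \<mu> (A \<omega>)) * (measure \<nu> UNIV - levy_cf_exp \<nu> (B \<omega>)) \<partial>M)"
proof -
  note bm = lv_basic[OF mu] and bn = lv_basic[OF nu]
  interpret M: prob_space M by fact
  interpret m: finite_measure \<mu> by (rule bm(1))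
  interpret n: finite_measure \<nu> by (rule bn(1))
  interpret MN: finite_measure "\<mu> \<Otimes>\<^sub>M \<nu>" by (rule finite_measure_pair_measure[OF bn(1) bm(1)])
  interpret Q: pair_sigma_finite "\<mu> \<Otimes>\<^sub>M \<nu>" M by unfold_locales
  interpret QQ: finite_measure "(\<mu> \<Otimes>\<^sub>M \<nu>) \<Otimes>\<^sub>M M"
    by (rule finite_measure_pair_measure) unfold_locales
  have eqs: "borel_measurable ((\<mu> \<Otimes>\<^sub>M \<nu>) \<Otimes>\<^sub>M M) = borel_measurable (((borel::'m measure) \<Otimes>\<^sub>M (borel::'n measure)) \<Otimes>\<^sub>M M)"
    by (rule measurable_cong_sets) (simp_all add: bm bn)
  have i: "integrable ((\<mu> \<Otimes>\<^sub>M \<nu>) \<Otimes>\<^sub>M M) (\<lambda>(p, \<omega>). cos (fst p \<bullet> A \<omega> + snd p \<bullet> B \<omega>))"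
  proof (rule QQ.integrable_const_bound[where B=1])
    show "AE x in (\<mu> \<Otimes>\<^sub>M \<nu>) \<Otimes>\<^sub>M M. norm ((\<lambda>(p, \<omega>). cos (fst p \<bullet> A \<omega> + snd p \<bullet> B \<omega>)) x) \<le> 1"
      by (rule AE_I2) (auto split: prod.split)
    show "(\<lambda>(p, \<omega>). cos (fst p \<bullet> A \<omega> + snd p \<bullet> B \<omega>)) \<in> borel_measurable ((\<mu> \<Otimes>\<^sub>M \<nu>) \<Otimes>\<^sub>M M)"
      unfolding eqs by measurable
  qed
  show "integrable (\<mu> \<Otimes>\<^sub>M \<nu>) (\<lambda>p. \<integral>\<omega>. cos (fst p \<bullet> A \<omega> + snd p \<bullet> B \<omega>) \<partial>M)"
    using Q.integrable_fst'[OF i] by simp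
  have "(\<integral>p. (\<integral>\<omega>. cos (fst p \<bullet> A \<omega> + snd p \<bullet> B \<omega>) \<partial>M) \<partial>(\<mu> \<Otimes>\<^sub>M \<nu>)) =
     (\<integral>\<omega>. (\<integral>p. cos (fst p \<bullet> A \<omega> + snd p \<bullet> B \<omega>) \<partial>(\<mu> \<Otimes>\<^sub>M \<nu>)) \<partial>M)"
    using Q.Fubini_integral[of "\<lambda>p \<omega>. cos (fst p \<bullet> A \<omega> + snd p \<bullet> B \<omega>)"] i by simp
  also have "\<dots> = (\<integral>\<omega>. (measure \<mu> UNIV - levy_cf_exp \<mu> (A \<omega>)) * (measure \<nu> UNIV - levy_cf_exp \<nu> (B \<omega>)) \<partial>M)"
    by (rule Bochner_Integration.integral_cong[OF refl]) (rule lemmaP(2)[OF mu nu])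
  finally show "(\<integral>p. (\<integral>\<omega>. cos (fst p \<bullet> A \<omega> + snd p \<bullet> B \<omega>) \<partial>M) \<partial>(\<mu> \<Otimes>\<^sub>M \<nu>)) =
     (\<integral>\<omega>. (measure \<mu> UNIV - levy_cf_exp \<mu> (A \<omega>)) * (measure \<nu> UNIV - levy_cf_exp \<nu> (B \<omega>)) \<partial>M)" .
qed


lemma (in prob_space) INDV:
  fixes f :: "'x \<times> 'x \<Rightarrow> real"
  assumes ind: "indep_var T1 U T2 V" and f[measurable]: "f \<in> borel_measurable (T1 \<Otimes>\<^sub>M T2)"
    and fb: "\<And>p. \<bar>f p\<bar> \<le> c"
  shows "(\<integral>\<omega>. f (U \<omega>, V \<omega>) \<partial>M) = (\<integral>\<omega>. (\<integral>\<omega>'. f (U \<omega>, V \<omega>') \<partial>M) \<partial>M)"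
proof -
  have rv: "random_variable T1 U" "random_variable T2 V"
    and D: "distr M T1 U \<Otimes>\<^sub>M distr M T2 V = distr M (T1 \<Otimes>\<^sub>M T2) (\<lambda>x. (U x, V x))"
    using ind indep_var_distribution_eq by blast+
  note rv[measurable]
  interpret DU: prob_space "distr M T1 U" by (rule prob_space_distr) (rule rv)
  interpret DV: prob_space "distr M T2 V" by (rule prob_space_distr) (rule rv)
  interpret DUV: pair_prob_space "distr M T1 U" "distr M T2 V" ..
  have Ffin: "finite_measure (distr M T1 U \<Otimes>\<^sub>M distr M T2 V)"
    by (rule finite_measure_pair_measure) unfold_locales
  have i: "integrable (distr M T1 U \<Otimes>\<^sub>M distr M T2 V) f"
    by (rule finite_measure.integrable_const_bound[OF Ffin, where B=c]) (use fb in auto)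
  have "(\<integral>\<omega>. f (U \<omega>, V \<omega>) \<partial>M) = (\<integral>p. f p \<partial>distr M (T1 \<Otimes>\<^sub>M T2) (\<lambda>x. (U x, V x)))"
    by (rule integral_distr[symmetric]) auto
  also have "\<dots> = (\<integral>p. f p \<partial>(distr M T1 U \<Otimes>\<^sub>M distr M T2 V))" by (simp add: D)
  also have "\<dots> = (\<integral>x. (\<integral>y. f (x, y) \<partial>distr M T2 V) \<partial>distr M T1 U)"
    by (rule DUV.integral_fst'[OF i, symmetric])
  also have "\<dots> = (\<integral>x. (\<integral>\<omega>'. f (x, V \<omega>') \<partial>M) \<partial>distr M T1 U)"
    by (rule Bochner_Integration.integral_cong[OF refl], rule integral_distr) auto
  also have "\<dots> = (\<integral>\<omega>. (\<integral>\<omega>'. f (U \<omega>, V \<omega>') \<partial>M) \<partial>M)"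
    by (rule integral_distr) auto
  finally show ?thesis .
qed


locale dc = prob_space M for M :: "'w measure" +
  fixes X :: "'w \<Rightarrow> real ^ 'm" and Y :: "'w \<Rightarrow> real ^ 'n"
    and Xs :: "nat \<Rightarrow> 'w \<Rightarrow> real ^ 'm" and Ys :: "nat \<Rightarrow> 'w \<Rightarrow> real ^ 'n"
    and \<mu> :: "(real ^ 'm) measure" and \<nu> :: "(real ^ 'n) measure"
    and \<Phi> :: "real ^ 'm \<Rightarrow> real" and \<Psi> :: "real ^ 'n \<Rightarrow> real"
  assumes X[measurable]: "X \<in> borel_measurable M" and Y[measurable]: "Y \<in> borel_measurable M"
    and XsYs: "\<And>i. i \<in> {1..4} \<Longrightarrow> Xs i \<in> borel_measurable M \<and> Ys i \<in> borel_measurable M"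
    and indep: "indep_vars (\<lambda>_. borel \<Otimes>\<^sub>M borel) (\<lambda>i \<omega>. (Xs i \<omega>, Ys i \<omega>)) {1..4}"
    and ident: "\<And>i. i \<in> {1..4} \<Longrightarrow>
        distr M (borel \<Otimes>\<^sub>M borel) (\<lambda>\<omega>. (Xs i \<omega>, Ys i \<omega>)) = distr M (borel \<Otimes>\<^sub>M borel) (\<lambda>\<omega>. (X \<omega>, Y \<omega>))"
    and mu: "finite_sym_levy_full \<mu>" and nu: "finite_sym_levy_full \<nu>"
    and Phi: "\<Phi> = levy_cf_exp \<mu>" and Psi: "\<Psi> = levy_cf_exp \<nu>"
begin

abbreviation "cm \<equiv> measure \<mu> UNIV"
abbreviation "cn \<equiv> measure \<nu> UNIV"

lemma measXY[measurable]:
  "Xs 1 \<in> borel_measurable M" "Xs 2 \<in> borel_measurable M" "Xs 3 \<in> borel_measurable M" "Xs 4 \<in> borel_measurable M"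
  "Ys 1 \<in> borel_measurable M" "Ys 2 \<in> borel_measurable M" "Ys 3 \<in> borel_measurable M" "Ys 4 \<in> borel_measurable M"
  using XsYs[of 1] XsYs[of 2] XsYs[of 3] XsYs[of 4] by auto

lemma measZ: "i \<in> {1..4} \<Longrightarrow> (\<lambda>\<omega>. (Xs i \<omega>, Ys i \<omega>)) \<in> measurable M (borel \<Otimes>\<^sub>M borel)"
  using XsYs[of i] by (auto intro!: measurable_Pair)

lemma Phi_meas[measurable]: "\<Phi> \<in> borel_measurable borel" and Psi_meas[measurable]: "\<Psi> \<in> borel_measurable borel"
  using lv_meas[OF mu] lv_meas[OF nu] Phi Psi by auto

lemma Phi_bnd: "\<bar>\<Phi> x\<bar> \<le> 2 * cm" "0 \<le> \<Phi> x" "\<Phi> x \<le> 2 * cm"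
  using lv_bounds[OF mu, of x] Phi by auto

lemma Psi_bnd: "\<bar>\<Psi> x\<bar> \<le> 2 * cn" "0 \<le> \<Psi> x" "\<Psi> x \<le> 2 * cn"
  using lv_bounds[OF nu, of x] Psi by auto

lemma cm_nn: "0 \<le> cm" and cn_nn: "0 \<le> cn" by auto

lemma Phi_even: "\<Phi> (a - b) = \<Phi> (b - a)" and Psi_even: "\<Psi> (c - d) = \<Psi> (d - c)"
  using lv_even'[OF mu] lv_even'[OF nu] Phi Psi by auto

lemma LAW1:
  fixes f :: "(real ^ 'm) \<times> (real ^ 'n) \<Rightarrow> 'b::{banach, second_countable_topology}"
  assumes i: "i \<in> {1..4}" and f: "f \<in> borel_measurable (borel \<Otimes>\<^sub>M borel)"
  shows "(\<integral>\<omega>. f (Xs i \<omega>, Ys i \<omega>) \<partial>M) = (\<integral>\<omega>. f (X \<omega>, Y \<omega>) \<partial>M)"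
proof -
  have "(\<integral>\<omega>. f (Xs i \<omega>, Ys i \<omega>) \<partial>M) = integral\<^sup>L (distr M (borel \<Otimes>\<^sub>M borel) (\<lambda>\<omega>. (Xs i \<omega>, Ys i \<omega>))) f"
    by (rule integral_distr[symmetric, OF measZ[OF i] f])
  also have "\<dots> = integral\<^sup>L (distr M (borel \<Otimes>\<^sub>M borel) (\<lambda>\<omega>. (X \<omega>, Y \<omega>))) f"
    by (simp add: ident[OF i])
  also have "\<dots> = (\<integral>\<omega>. f (X \<omega>, Y \<omega>) \<partial>M)"
    by (rule integral_distr) (auto intro: f)
  finally show ?thesis .
qed

lemma bnd_integrable:
  fixes f :: "'w \<Rightarrow> 'b::{banach, second_countable_topology}"
  shows "f \<in> borel_measurable M \<Longrightarrow> (\<And>x. norm (f x) \<le> c) \<Longrightarrow> integrable M f"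
  by (rule integrable_const_bound[where B=c]) auto

lemma IND:
  fixes W :: "nat \<Rightarrow> (real ^ 'm) \<times> (real ^ 'n) \<Rightarrow> complex"
  assumes I: "I \<subseteq> {1..4}" and W: "\<And>i. i \<in> I \<Longrightarrow> W i \<in> borel_measurable (borel \<Otimes>\<^sub>M borel)"
    and Wb: "\<And>i z. i \<in> I \<Longrightarrow> norm (W i z) \<le> 1"
  shows "(\<integral>\<omega>. (\<Prod>i\<in>I. W i (Xs i \<omega>, Ys i \<omega>)) \<partial>M) = (\<Prod>i\<in>I. \<integral>\<omega>. W i (X \<omega>, Y \<omega>) \<partial>M)"
proof -
  have fin: "finite I" using I by (rule finite_subset) simp
  have "indep_vars (\<lambda>_. borel \<Otimes>\<^sub>M borel) (\<lambda>i \<omega>. (Xs i \<omega>, Ys i \<omega>)) I"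
    by (rule indep_vars_subset[OF indep I])
  then have ind: "indep_vars (\<lambda>_. borel) (\<lambda>i \<omega>. W i (Xs i \<omega>, Ys i \<omega>)) I"
    using indep_vars_compose2[where Y=W and N="\<lambda>_. borel"] W by auto
  have mi: "\<And>i. i \<in> I \<Longrightarrow> (\<lambda>\<omega>. W i (Xs i \<omega>, Ys i \<omega>)) \<in> borel_measurable M"
    using W measZ I by (auto intro: measurable_compose)
  have "(\<integral>\<omega>. (\<Prod>i\<in>I. W i (Xs i \<omega>, Ys i \<omega>)) \<partial>M) = (\<Prod>i\<in>I. \<integral>\<omega>. W i (Xs i \<omega>, Ys i \<omega>) \<partial>M)"
    by (rule indep_vars_lebesgue_integral[OF fin ind]) (use mi Wb in \<open>auto intro!: bnd_integrable[where c=1]\<close>)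
  also have "\<dots> = (\<Prod>i\<in>I. \<integral>\<omega>. W i (X \<omega>, Y \<omega>) \<partial>M)"
    by (rule prod.cong[OF refl], rule LAW1) (use I W in auto)
  finally show ?thesis .
qed


abbreviation "SS \<equiv> (borel::(real ^ 'm) measure) \<Otimes>\<^sub>M (borel::(real ^ 'n) measure)"

lemma GROUP:
  fixes f :: "((nat \<Rightarrow> (real ^ 'm) \<times> (real ^ 'n)) \<times> (nat \<Rightarrow> (real ^ 'm) \<times> (real ^ 'n))) \<Rightarrow> real"
  assumes AB: "A \<inter> B = {}" "A \<subseteq> {1..4}" "B \<subseteq> {1..4}"
    and f: "f \<in> borel_measurable (PiM A (\<lambda>_. SS) \<Otimes>\<^sub>M PiM B (\<lambda>_. SS))"
    and fb: "\<And>p. \<bar>f p\<bar> \<le> c"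
  shows "(\<integral>\<omega>. f (restrict (\<lambda>i. (Xs i \<omega>, Ys i \<omega>)) A, restrict (\<lambda>i. (Xs i \<omega>, Ys i \<omega>)) B) \<partial>M) =
    (\<integral>\<omega>. (\<integral>\<omega>'. f (restrict (\<lambda>i. (Xs i \<omega>, Ys i \<omega>)) A, restrict (\<lambda>i. (Xs i \<omega>', Ys i \<omega>')) B) \<partial>M) \<partial>M)"
  using INDV[OF indep_var_restrict[OF indep AB] f fb] by simp

lemma PAIR:
  fixes g :: "((real ^ 'm) \<times> (real ^ 'n)) \<times> ((real ^ 'm) \<times> (real ^ 'n)) \<Rightarrow> real" and i j k l :: nat
  assumes ij: "i \<in> {1..4}" "j \<in> {1..4}" "i \<noteq> j"
    and g: "g \<in> borel_measurable (SS \<Otimes>\<^sub>M SS)" and gb: "\<And>p. \<bar>g p\<bar> \<le> c"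
  shows "(\<integral>\<omega>. g ((Xs i \<omega>, Ys i \<omega>), (Xs j \<omega>, Ys j \<omega>)) \<partial>M) =
    (\<integral>\<omega>. (\<integral>\<omega>'. g ((Xs i \<omega>, Ys i \<omega>), (Xs j \<omega>', Ys j \<omega>')) \<partial>M) \<partial>M)"
proof -
  have m: "(\<lambda>p. (fst p i, snd p j)) \<in> measurable (PiM {i} (\<lambda>_. SS) \<Otimes>\<^sub>M PiM {j} (\<lambda>_. SS)) (SS \<Otimes>\<^sub>M SS)"
    by (intro measurable_Pair measurable_compose[OF measurable_fst measurable_component_singleton]
        measurable_compose[OF measurable_snd measurable_component_singleton]) auto
  have "(\<lambda>p. g (fst p i, snd p j)) \<in> borel_measurable (PiM {i} (\<lambda>_. SS) \<Otimes>\<^sub>M PiM {j} (\<lambda>_. SS))"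
    using measurable_compose[OF m g] by simp
  from GROUP[of "{i}" "{j}", OF _ _ _ this gb] ij show ?thesis by simp
qed

lemma TRIP:
  fixes g :: "(((real ^ 'm) \<times> (real ^ 'n)) \<times> ((real ^ 'm) \<times> (real ^ 'n))) \<times> ((real ^ 'm) \<times> (real ^ 'n)) \<Rightarrow> real" and i j k l :: nat
  assumes ij: "i \<in> {1..4}" "j \<in> {1..4}" "k \<in> {1..4}" "i \<noteq> j" "i \<noteq> k" "j \<noteq> k"
    and g: "g \<in> borel_measurable ((SS \<Otimes>\<^sub>M SS) \<Otimes>\<^sub>M SS)" and gb: "\<And>p. \<bar>g p\<bar> \<le> c"
  shows "(\<integral>\<omega>. g (((Xs i \<omega>, Ys i \<omega>), (Xs j \<omega>, Ys j \<omega>)), (Xs k \<omega>, Ys k \<omega>)) \<partial>M) =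
    (\<integral>\<omega>. (\<integral>\<omega>'. g (((Xs i \<omega>, Ys i \<omega>), (Xs j \<omega>, Ys j \<omega>)), (Xs k \<omega>', Ys k \<omega>')) \<partial>M) \<partial>M)"
proof -
  have m: "(\<lambda>p. ((fst p i, fst p j), snd p k)) \<in> measurable (PiM {i, j} (\<lambda>_. SS) \<Otimes>\<^sub>M PiM {k} (\<lambda>_. SS)) ((SS \<Otimes>\<^sub>M SS) \<Otimes>\<^sub>M SS)"
    by (intro measurable_Pair measurable_compose[OF measurable_fst measurable_component_singleton]
        measurable_compose[OF measurable_snd measurable_component_singleton]) auto
  have "(\<lambda>p. g ((fst p i, fst p j), snd p k)) \<in> borel_measurable (PiM {i, j} (\<lambda>_. SS) \<Otimes>\<^sub>M PiM {k} (\<lambda>_. SS))"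
    using measurable_compose[OF m g] by simp
  from GROUP[of "{i, j}" "{k}", OF _ _ _ this gb] ij show ?thesis by simp
qed

lemma QUAD:
  fixes g :: "(((real ^ 'm) \<times> (real ^ 'n)) \<times> ((real ^ 'm) \<times> (real ^ 'n))) \<times> (((real ^ 'm) \<times> (real ^ 'n)) \<times> ((real ^ 'm) \<times> (real ^ 'n))) \<Rightarrow> real" and i j k l :: nat
  assumes ij: "i \<in> {1..4}" "j \<in> {1..4}" "k \<in> {1..4}" "l \<in> {1..4}"
    "i \<noteq> j" "i \<noteq> k" "i \<noteq> l" "j \<noteq> k" "j \<noteq> l" "k \<noteq> l"
    and g: "g \<in> borel_measurable ((SS \<Otimes>\<^sub>M SS) \<Otimes>\<^sub>M (SS \<Otimes>\<^sub>M SS))" and gb: "\<And>p. \<bar>g p\<bar> \<le> c"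
  shows "(\<integral>\<omega>. g (((Xs i \<omega>, Ys i \<omega>), (Xs j \<omega>, Ys j \<omega>)), ((Xs k \<omega>, Ys k \<omega>), (Xs l \<omega>, Ys l \<omega>))) \<partial>M) =
    (\<integral>\<omega>. (\<integral>\<omega>'. g (((Xs i \<omega>, Ys i \<omega>), (Xs j \<omega>, Ys j \<omega>)), ((Xs k \<omega>', Ys k \<omega>'), (Xs l \<omega>', Ys l \<omega>'))) \<partial>M) \<partial>M)"
proof -
  have m: "(\<lambda>p. ((fst p i, fst p j), (snd p k, snd p l))) \<in> measurable (PiM {i, j} (\<lambda>_. SS) \<Otimes>\<^sub>M PiM {k, l} (\<lambda>_. SS)) ((SS \<Otimes>\<^sub>M SS) \<Otimes>\<^sub>M (SS \<Otimes>\<^sub>M SS))"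
    by (intro measurable_Pair measurable_compose[OF measurable_fst measurable_component_singleton]
        measurable_compose[OF measurable_snd measurable_component_singleton]) auto
  have "(\<lambda>p. g ((fst p i, fst p j), (snd p k, snd p l))) \<in> borel_measurable (PiM {i, j} (\<lambda>_. SS) \<Otimes>\<^sub>M PiM {k, l} (\<lambda>_. SS))"
    using measurable_compose[OF m g] by simp
  from GROUP[of "{i, j}" "{k, l}", OF _ _ _ this gb] ij show ?thesis by simp
qed


abbreviation "JJ s t \<equiv> joint_char_fn M X Y s t"
abbreviation "FF s \<equiv> char_fn M X s"
abbreviation "GG t \<equiv> char_fn M Y t"

lemma cis_borel[measurable]: "cis \<in> borel_measurable borel"
  by (rule borel_measurable_continuous_onI) (auto intro!: continuous_intros)

lemma measXYi[measurable]: "i \<in> {1..4} \<Longrightarrow> Xs i \<in> borel_measurable M" "i \<in> {1..4} \<Longrightarrow> Ys i \<in> borel_measurable M"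
  using XsYs by auto

lemma cis_meas[measurable]:
  "(\<lambda>z::(real ^ 'm) \<times> (real ^ 'n). cis (s \<bullet> fst z + t \<bullet> snd z)) \<in> borel_measurable SS"
  "(\<lambda>z::(real ^ 'm) \<times> (real ^ 'n). cis (- (s \<bullet> fst z + t \<bullet> snd z))) \<in> borel_measurable SS"
  "(\<lambda>z::(real ^ 'm) \<times> (real ^ 'n). cis (s \<bullet> fst z)) \<in> borel_measurable SS"
  "(\<lambda>z::(real ^ 'm) \<times> (real ^ 'n). cis (- (s \<bullet> fst z))) \<in> borel_measurable SS"
  "(\<lambda>z::(real ^ 'm) \<times> (real ^ 'n). cis (t \<bullet> snd z)) \<in> borel_measurable SS"
  "(\<lambda>z::(real ^ 'm) \<times> (real ^ 'n). cis (- (t \<bullet> snd z))) \<in> borel_measurable SS"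
  by (auto intro!: borel_measurable_continuous_onI continuous_intros simp: borel_prod)

lemma C1:
  assumes ab: "a \<in> {1..4}" "b \<in> {1..4}" "a \<noteq> b"
  shows "(\<integral>\<omega>. cos (s \<bullet> (Xs a \<omega> - Xs b \<omega>) + t \<bullet> (Ys a \<omega> - Ys b \<omega>)) \<partial>M) = Re (JJ s t * cnj (JJ s t))"
proof -
  define W where "W = (\<lambda>i. if i = a then (\<lambda>z::(real ^ 'm) \<times> (real ^ 'n). cis (s \<bullet> fst z + t \<bullet> snd z))
      else (\<lambda>z. cis (- (s \<bullet> fst z + t \<bullet> snd z))))"
  have "(\<integral>\<omega>. (\<Prod>i\<in>{a, b}. W i (Xs i \<omega>, Ys i \<omega>)) \<partial>M) = (\<Prod>i\<in>{a, b}. \<integral>\<omega>. W i (X \<omega>, Y \<omega>) \<partial>M)"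
    by (rule IND) (use ab cis_meas in \<open>auto simp: W_def\<close>)
  then have "(\<integral>\<omega>. cis (s \<bullet> Xs a \<omega> + t \<bullet> Ys a \<omega>) * cis (- (s \<bullet> Xs b \<omega> + t \<bullet> Ys b \<omega>)) \<partial>M) =
      JJ s t * (\<integral>\<omega>. cis (- (s \<bullet> X \<omega> + t \<bullet> Y \<omega>)) \<partial>M)"
    using ab by (simp add: W_def joint_char_fn_def)
  also have "(\<integral>\<omega>. cis (- (s \<bullet> X \<omega> + t \<bullet> Y \<omega>)) \<partial>M) = cnj (JJ s t)"
    unfolding joint_char_fn_def by (subst Bochner_Integration.integral_cnj[symmetric]) (simp del: Bochner_Integration.integral_cnj add: cis_cnj)
  finally have e: "(\<integral>\<omega>. cis (s \<bullet> Xs a \<omega> + t \<bullet> Ys a \<omega>) * cis (- (s \<bullet> Xs b \<omega> + t \<bullet> Ys b \<omega>)) \<partial>M) = JJ s t * cnj (JJ s t)" .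
  have "(\<integral>\<omega>. cos (s \<bullet> (Xs a \<omega> - Xs b \<omega>) + t \<bullet> (Ys a \<omega> - Ys b \<omega>)) \<partial>M) =
     (\<integral>\<omega>. Re (cis (s \<bullet> Xs a \<omega> + t \<bullet> Ys a \<omega>) * cis (- (s \<bullet> Xs b \<omega> + t \<bullet> Ys b \<omega>))) \<partial>M)"
    by (simp add: cis_mult inner_diff_right algebra_simps)
  also have "\<dots> = Re (\<integral>\<omega>. cis (s \<bullet> Xs a \<omega> + t \<bullet> Ys a \<omega>) * cis (- (s \<bullet> Xs b \<omega> + t \<bullet> Ys b \<omega>)) \<partial>M)"
    by (rule Bochner_Integration.integral_Re, rule bnd_integrable[where c=1]) (use ab in \<open>auto simp: norm_mult\<close>)
  also have "\<dots> = Re (JJ s t * cnj (JJ s t))" by (simp only: e)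
  finally show ?thesis .
qed


lemma C2:
  assumes ab: "c \<in> {1..4}" "d \<in> {1..4}" "e \<in> {1..4}" "c \<noteq> d" "c \<noteq> e" "d \<noteq> e"
  shows "(\<integral>\<omega>. cos (s \<bullet> (Xs c \<omega> - Xs d \<omega>) + t \<bullet> (Ys c \<omega> - Ys e \<omega>)) \<partial>M) = Re (JJ s t * (cnj (FF s) * cnj (GG t)))"
proof -
  define W where "W = (\<lambda>i. if i = c then (\<lambda>z::(real ^ 'm) \<times> (real ^ 'n). cis (s \<bullet> fst z + t \<bullet> snd z))
      else if i = d then (\<lambda>z. cis (- (s \<bullet> fst z))) else (\<lambda>z. cis (- (t \<bullet> snd z))))"
  have "(\<integral>\<omega>. (\<Prod>i\<in>{c, d, e}. W i (Xs i \<omega>, Ys i \<omega>)) \<partial>M) = (\<Prod>i\<in>{c, d, e}. \<integral>\<omega>. W i (X \<omega>, Y \<omega>) \<partial>M)"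
    by (rule IND) (use ab cis_meas in \<open>auto simp: W_def\<close>)
  then have "(\<integral>\<omega>. cis (s \<bullet> Xs c \<omega> + t \<bullet> Ys c \<omega>) * (cis (- (s \<bullet> Xs d \<omega>)) * cis (- (t \<bullet> Ys e \<omega>))) \<partial>M) =
      JJ s t * ((\<integral>\<omega>. cis (- (s \<bullet> X \<omega>)) \<partial>M) * (\<integral>\<omega>. cis (- (t \<bullet> Y \<omega>)) \<partial>M))"
    using ab by (simp add: W_def joint_char_fn_def)
  also have "(\<integral>\<omega>. cis (- (s \<bullet> X \<omega>)) \<partial>M) = cnj (FF s)"
    unfolding char_fn_def by (subst Bochner_Integration.integral_cnj[symmetric]) (simp del: Bochner_Integration.integral_cnj add: cis_cnj)
  also have "(\<integral>\<omega>. cis (- (t \<bullet> Y \<omega>)) \<partial>M) = cnj (GG t)"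
    unfolding char_fn_def by (subst Bochner_Integration.integral_cnj[symmetric]) (simp del: Bochner_Integration.integral_cnj add: cis_cnj)
  finally have e: "(\<integral>\<omega>. cis (s \<bullet> Xs c \<omega> + t \<bullet> Ys c \<omega>) * (cis (- (s \<bullet> Xs d \<omega>)) * cis (- (t \<bullet> Ys e \<omega>))) \<partial>M) =
      JJ s t * (cnj (FF s) * cnj (GG t))" .
  have "(\<integral>\<omega>. cos (s \<bullet> (Xs c \<omega> - Xs d \<omega>) + t \<bullet> (Ys c \<omega> - Ys e \<omega>)) \<partial>M) =
     (\<integral>\<omega>. Re (cis (s \<bullet> Xs c \<omega> + t \<bullet> Ys c \<omega>) * (cis (- (s \<bullet> Xs d \<omega>)) * cis (- (t \<bullet> Ys e \<omega>)))) \<partial>M)"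
    by (simp add: cis_mult inner_diff_right algebra_simps)
  also have "\<dots> = Re (\<integral>\<omega>. cis (s \<bullet> Xs c \<omega> + t \<bullet> Ys c \<omega>) * (cis (- (s \<bullet> Xs d \<omega>)) * cis (- (t \<bullet> Ys e \<omega>))) \<partial>M)"
    by (rule Bochner_Integration.integral_Re, rule bnd_integrable[where c=1]) (use ab in \<open>auto simp: norm_mult\<close>)
  also have "\<dots> = Re (JJ s t * (cnj (FF s) * cnj (GG t)))" by (simp only: e)
  finally show ?thesis .
qed

lemma C3:
  assumes ab: "i \<in> {1..4}" "j \<in> {1..4}" "k \<in> {1..4}" "l \<in> {1..4}"
    "i \<noteq> j" "i \<noteq> k" "i \<noteq> l" "j \<noteq> k" "j \<noteq> l" "k \<noteq> l"
  shows "(\<integral>\<omega>. cos (s \<bullet> (Xs i \<omega> - Xs j \<omega>) + t \<bullet> (Ys k \<omega> - Ys l \<omega>)) \<partial>M) = Re (FF s * (cnj (FF s) * (GG t * cnj (GG t))))"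
proof -
  define W where "W = (\<lambda>q. if q = i then (\<lambda>z::(real ^ 'm) \<times> (real ^ 'n). cis (s \<bullet> fst z))
      else if q = j then (\<lambda>z. cis (- (s \<bullet> fst z))) else if q = k then (\<lambda>z. cis (t \<bullet> snd z)) else (\<lambda>z. cis (- (t \<bullet> snd z))))"
  have "(\<integral>\<omega>. (\<Prod>q\<in>{i, j, k, l}. W q (Xs q \<omega>, Ys q \<omega>)) \<partial>M) = (\<Prod>q\<in>{i, j, k, l}. \<integral>\<omega>. W q (X \<omega>, Y \<omega>) \<partial>M)"
    by (rule IND) (use ab cis_meas in \<open>auto simp: W_def\<close>)
  then have "(\<integral>\<omega>. cis (s \<bullet> Xs i \<omega>) * (cis (- (s \<bullet> Xs j \<omega>)) * (cis (t \<bullet> Ys k \<omega>) * cis (- (t \<bullet> Ys l \<omega>)))) \<partial>M) =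
      FF s * ((\<integral>\<omega>. cis (- (s \<bullet> X \<omega>)) \<partial>M) * (GG t * (\<integral>\<omega>. cis (- (t \<bullet> Y \<omega>)) \<partial>M)))"
    using ab by (simp add: W_def char_fn_def)
  also have "(\<integral>\<omega>. cis (- (s \<bullet> X \<omega>)) \<partial>M) = cnj (FF s)"
    unfolding char_fn_def by (subst Bochner_Integration.integral_cnj[symmetric]) (simp del: Bochner_Integration.integral_cnj add: cis_cnj)
  also have "(\<integral>\<omega>. cis (- (t \<bullet> Y \<omega>)) \<partial>M) = cnj (GG t)"
    unfolding char_fn_def by (subst Bochner_Integration.integral_cnj[symmetric]) (simp del: Bochner_Integration.integral_cnj add: cis_cnj)
  finally have e: "(\<integral>\<omega>. cis (s \<bullet> Xs i \<omega>) * (cis (- (s \<bullet> Xs j \<omega>)) * (cis (t \<bullet> Ys k \<omega>) * cis (- (t \<bullet> Ys l \<omega>)))) \<partial>M) =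
      FF s * (cnj (FF s) * (GG t * cnj (GG t)))" .
  have "(\<integral>\<omega>. cos (s \<bullet> (Xs i \<omega> - Xs j \<omega>) + t \<bullet> (Ys k \<omega> - Ys l \<omega>)) \<partial>M) =
     (\<integral>\<omega>. Re (cis (s \<bullet> Xs i \<omega>) * (cis (- (s \<bullet> Xs j \<omega>)) * (cis (t \<bullet> Ys k \<omega>) * cis (- (t \<bullet> Ys l \<omega>))))) \<partial>M)"
    by (simp add: cis_mult inner_diff_right algebra_simps)
  also have "\<dots> = Re (\<integral>\<omega>. cis (s \<bullet> Xs i \<omega>) * (cis (- (s \<bullet> Xs j \<omega>)) * (cis (t \<bullet> Ys k \<omega>) * cis (- (t \<bullet> Ys l \<omega>)))) \<partial>M)"
    by (rule Bochner_Integration.integral_Re, rule bnd_integrable[where c=1]) (use ab in \<open>auto simp: norm_mult\<close>)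
  also have "\<dots> = Re (FF s * (cnj (FF s) * (GG t * cnj (GG t))))" by (simp only: e)
  finally show ?thesis .
qed

lemma cmod_alg:
  fixes J F G :: complex
  shows "(cmod (J - F * G))\<^sup>2 = Re (J * cnj J) - 2 * Re (J * (cnj F * cnj G)) + Re (F * (cnj F * (G * cnj G)))"
  unfolding cmod_power2 by (simp add: power2_eq_square algebra_simps)


lemma MAIN:
  assumes ab: "a \<in> {1..4}" "b \<in> {1..4}" "a \<noteq> b"
    and cde: "c \<in> {1..4}" "d \<in> {1..4}" "e \<in> {1..4}" "c \<noteq> d" "c \<noteq> e" "d \<noteq> e"
    and ijkl: "i \<in> {1..4}" "j \<in> {1..4}" "k \<in> {1..4}" "l \<in> {1..4}"
      "i \<noteq> j" "i \<noteq> k" "i \<noteq> l" "j \<noteq> k" "j \<noteq> l" "k \<noteq> l"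
  shows "dcov2 \<mu> \<nu> M X Y =
     (\<integral>\<omega>. (cm - \<Phi> (Xs a \<omega> - Xs b \<omega>)) * (cn - \<Psi> (Ys a \<omega> - Ys b \<omega>)) \<partial>M)
     - 2 * (\<integral>\<omega>. (cm - \<Phi> (Xs c \<omega> - Xs d \<omega>)) * (cn - \<Psi> (Ys c \<omega> - Ys e \<omega>)) \<partial>M)
     + (\<integral>\<omega>. (cm - \<Phi> (Xs i \<omega> - Xs j \<omega>)) * (cn - \<Psi> (Ys k \<omega> - Ys l \<omega>)) \<partial>M)"
proof -
  have [measurable]: "Xs a \<in> borel_measurable M" "Xs b \<in> borel_measurable M" "Ys a \<in> borel_measurable M" "Ys b \<in> borel_measurable M"
    "Xs c \<in> borel_measurable M" "Xs d \<in> borel_measurable M" "Ys c \<in> borel_measurable M" "Ys e \<in> borel_measurable M"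
    "Xs i \<in> borel_measurable M" "Xs j \<in> borel_measurable M" "Ys k \<in> borel_measurable M" "Ys l \<in> borel_measurable M"
    using ab cde ijkl measXYi by auto
  note L1 = lambda0[OF mu nu prob_space_axioms, of "\<lambda>\<omega>. Xs a \<omega> - Xs b \<omega>" "\<lambda>\<omega>. Ys a \<omega> - Ys b \<omega>"]
  note L2 = lambda0[OF mu nu prob_space_axioms, of "\<lambda>\<omega>. Xs c \<omega> - Xs d \<omega>" "\<lambda>\<omega>. Ys c \<omega> - Ys e \<omega>"]
  note L3 = lambda0[OF mu nu prob_space_axioms, of "\<lambda>\<omega>. Xs i \<omega> - Xs j \<omega>" "\<lambda>\<omega>. Ys k \<omega> - Ys l \<omega>"]
  define E1 where "E1 p = (\<integral>\<omega>. cos (fst p \<bullet> (Xs a \<omega> - Xs b \<omega>) + snd p \<bullet> (Ys a \<omega> - Ys b \<omega>)) \<partial>M)" for p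
  define E2 where "E2 p = (\<integral>\<omega>. cos (fst p \<bullet> (Xs c \<omega> - Xs d \<omega>) + snd p \<bullet> (Ys c \<omega> - Ys e \<omega>)) \<partial>M)" for p
  define E3 where "E3 p = (\<integral>\<omega>. cos (fst p \<bullet> (Xs i \<omega> - Xs j \<omega>) + snd p \<bullet> (Ys k \<omega> - Ys l \<omega>)) \<partial>M)" for p
  have i1: "integrable (\<mu> \<Otimes>\<^sub>M \<nu>) E1" and i2: "integrable (\<mu> \<Otimes>\<^sub>M \<nu>) E2" and i3: "integrable (\<mu> \<Otimes>\<^sub>M \<nu>) E3"
    unfolding E1_def[abs_def] E2_def[abs_def] E3_def[abs_def] using L1(1) L2(1) L3(1) by auto
  have pw: "(case p of (s, t) \<Rightarrow> (cmod (joint_char_fn M X Y s t - char_fn M X s * char_fn M Y t))\<^sup>2) =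
      E1 p - 2 * E2 p + E3 p" for p
  proof (cases p)
    case (Pair s t)
    show ?thesis unfolding Pair cmod_alg E1_def E2_def E3_def
      using C1[OF ab, of s t] C2[OF cde, of s t] C3[OF ijkl, of s t] by simp
  qed
  have "dcov2 \<mu> \<nu> M X Y = (\<integral>p. E1 p - 2 * E2 p + E3 p \<partial>(\<mu> \<Otimes>\<^sub>M \<nu>))"
    unfolding dcov2_def by (rule Bochner_Integration.integral_cong[OF refl]) (rule pw)
  also have "\<dots> = (\<integral>p. E1 p \<partial>(\<mu> \<Otimes>\<^sub>M \<nu>)) - 2 * (\<integral>p. E2 p \<partial>(\<mu> \<Otimes>\<^sub>M \<nu>)) + (\<integral>p. E3 p \<partial>(\<mu> \<Otimes>\<^sub>M \<nu>))"
    using i1 i2 i3 by simp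
  also have "\<dots> = (\<integral>\<omega>. (cm - \<Phi> (Xs a \<omega> - Xs b \<omega>)) * (cn - \<Psi> (Ys a \<omega> - Ys b \<omega>)) \<partial>M)
     - 2 * (\<integral>\<omega>. (cm - \<Phi> (Xs c \<omega> - Xs d \<omega>)) * (cn - \<Psi> (Ys c \<omega> - Ys e \<omega>)) \<partial>M)
     + (\<integral>\<omega>. (cm - \<Phi> (Xs i \<omega> - Xs j \<omega>)) * (cn - \<Psi> (Ys k \<omega> - Ys l \<omega>)) \<partial>M)"
    unfolding E1_def[abs_def] E2_def[abs_def] E3_def[abs_def] using L1(2) L2(2) L3(2) Phi Psi by simp
  finally show ?thesis .
qed


lemma PP_bnd: "\<bar>\<Phi> x * \<Psi> y\<bar> \<le> 2 * cm * (2 * cn)"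
  unfolding abs_mult by (rule mult_mono) (use Phi_bnd Psi_bnd in auto)

lemma int_Phi: "A \<in> borel_measurable M \<Longrightarrow> integrable M (\<lambda>\<omega>. \<Phi> (A \<omega>))"
  by (rule bnd_integrable[where c="2 * cm"]) (auto simp: Phi_bnd)

lemma int_Psi: "B \<in> borel_measurable M \<Longrightarrow> integrable M (\<lambda>\<omega>. \<Psi> (B \<omega>))"
  by (rule bnd_integrable[where c="2 * cn"]) (auto simp: Psi_bnd)

lemma int_PP: "A \<in> borel_measurable M \<Longrightarrow> B \<in> borel_measurable M \<Longrightarrow> integrable M (\<lambda>\<omega>. \<Phi> (A \<omega>) * \<Psi> (B \<omega>))"
  by (rule bnd_integrable[where c="2 * cm * (2 * cn)"]) (use PP_bnd in auto)

lemma EXP: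
  assumes [measurable]: "A \<in> borel_measurable M" "B \<in> borel_measurable M"
  shows "(\<integral>\<omega>. (cm - \<Phi> (A \<omega>)) * (cn - \<Psi> (B \<omega>)) \<partial>M) =
    cm * cn - cm * (\<integral>\<omega>. \<Psi> (B \<omega>) \<partial>M) - cn * (\<integral>\<omega>. \<Phi> (A \<omega>) \<partial>M) + (\<integral>\<omega>. \<Phi> (A \<omega>) * \<Psi> (B \<omega>) \<partial>M)"
proof -
  have e: "(cm - \<Phi> (A \<omega>)) * (cn - \<Psi> (B \<omega>)) = cm * cn - cm * \<Psi> (B \<omega>) - cn * \<Phi> (A \<omega>) + \<Phi> (A \<omega>) * \<Psi> (B \<omega>)" for \<omega>
    by (simp add: algebra_simps)
  note i = int_Phi[OF assms(1)] int_Psi[OF assms(2)] int_PP[OF assms]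
  show ?thesis unfolding e using i by (simp add: prob_space)
qed

definition "Gx x = (\<integral>\<omega>'. \<Phi> (x - X \<omega>') \<partial>M)"
definition "Hy y = (\<integral>\<omega>'. \<Psi> (y - Y \<omega>') \<partial>M)"
definition "mX = (\<integral>\<omega>. Gx (X \<omega>) \<partial>M)"
definition "mY = (\<integral>\<omega>. Hy (Y \<omega>) \<partial>M)"

lemma Gx_meas[measurable]: "Gx \<in> borel_measurable borel"
  unfolding Gx_def[abs_def] by measurable

lemma Hy_meas[measurable]: "Hy \<in> borel_measurable borel"
  unfolding Hy_def[abs_def] by measurable

lemma Gx_bnd: "\<bar>Gx x\<bar> \<le> 2 * cm"
proof -
  have i: "integrable M (\<lambda>\<omega>'. \<Phi> (x - X \<omega>'))" by (rule int_Phi) measurable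
  have "0 \<le> Gx x" unfolding Gx_def by (rule integral_nonneg_AE) (auto simp: Phi_bnd)
  moreover have "Gx x \<le> (\<integral>\<omega>'. 2 * cm \<partial>M)" unfolding Gx_def
    by (rule Bochner_Integration.integral_mono[OF i]) (auto simp: Phi_bnd)
  ultimately show ?thesis by (simp add: prob_space)
qed

lemma Hy_bnd: "\<bar>Hy y\<bar> \<le> 2 * cn"
proof -
  have i: "integrable M (\<lambda>\<omega>'. \<Psi> (y - Y \<omega>'))" by (rule int_Psi) measurable
  have "0 \<le> Hy y" unfolding Hy_def by (rule integral_nonneg_AE) (auto simp: Psi_bnd)
  moreover have "Hy y \<le> (\<integral>\<omega>'. 2 * cn \<partial>M)" unfolding Hy_def
    by (rule Bochner_Integration.integral_mono[OF i]) (auto simp: Psi_bnd)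
  ultimately show ?thesis by (simp add: prob_space)
qed

lemma WG:
  assumes ij: "i \<in> {1..4}" "j \<in> {1..4}" "i \<noteq> j"
    and w[measurable]: "w \<in> borel_measurable SS" and wb: "\<And>z. \<bar>w z\<bar> \<le> 1"
  shows "(\<integral>\<omega>. w (Xs i \<omega>, Ys i \<omega>) * \<Phi> (Xs i \<omega> - Xs j \<omega>) \<partial>M) = (\<integral>\<omega>. w (Xs i \<omega>, Ys i \<omega>) * Gx (Xs i \<omega>) \<partial>M)"
proof -
  have gb: "\<bar>w (fst p) * \<Phi> (fst (fst p) - fst (snd p))\<bar> \<le> 1 * (2 * cm)" for p
    unfolding abs_mult by (rule mult_mono) (use wb Phi_bnd in auto)
  have "(\<integral>\<omega>. w (Xs i \<omega>, Ys i \<omega>) * \<Phi> (Xs i \<omega> - Xs j \<omega>) \<partial>M) =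
      (\<integral>\<omega>. (\<integral>\<omega>'. w (Xs i \<omega>, Ys i \<omega>) * \<Phi> (Xs i \<omega> - Xs j \<omega>') \<partial>M) \<partial>M)"
    using PAIR[OF ij, of "\<lambda>p. w (fst p) * \<Phi> (fst (fst p) - fst (snd p))", OF _ gb] by simp
  also have "\<dots> = (\<integral>\<omega>. w (Xs i \<omega>, Ys i \<omega>) * Gx (Xs i \<omega>) \<partial>M)"
  proof (rule Bochner_Integration.integral_cong[OF refl])
    fix \<omega>
    have "(\<integral>\<omega>'. \<Phi> (Xs i \<omega> - Xs j \<omega>') \<partial>M) = Gx (Xs i \<omega>)"
      unfolding Gx_def using LAW1[OF ij(2), of "\<lambda>z. \<Phi> (Xs i \<omega> - fst z)"] by simp
    then show "(\<integral>\<omega>'. w (Xs i \<omega>, Ys i \<omega>) * \<Phi> (Xs i \<omega> - Xs j \<omega>') \<partial>M) = w (Xs i \<omega>, Ys i \<omega>) * Gx (Xs i \<omega>)"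
      by simp
  qed
  finally show ?thesis .
qed

lemma WH:
  assumes ij: "i \<in> {1..4}" "j \<in> {1..4}" "i \<noteq> j"
    and w[measurable]: "w \<in> borel_measurable SS" and wb: "\<And>z. \<bar>w z\<bar> \<le> 1"
  shows "(\<integral>\<omega>. w (Xs i \<omega>, Ys i \<omega>) * \<Psi> (Ys i \<omega> - Ys j \<omega>) \<partial>M) = (\<integral>\<omega>. w (Xs i \<omega>, Ys i \<omega>) * Hy (Ys i \<omega>) \<partial>M)"
proof -
  have gb: "\<bar>w (fst p) * \<Psi> (snd (fst p) - snd (snd p))\<bar> \<le> 1 * (2 * cn)" for p
    unfolding abs_mult by (rule mult_mono) (use wb Psi_bnd in auto)
  have "(\<integral>\<omega>. w (Xs i \<omega>, Ys i \<omega>) * \<Psi> (Ys i \<omega> - Ys j \<omega>) \<partial>M) =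
      (\<integral>\<omega>. (\<integral>\<omega>'. w (Xs i \<omega>, Ys i \<omega>) * \<Psi> (Ys i \<omega> - Ys j \<omega>') \<partial>M) \<partial>M)"
    using PAIR[OF ij, of "\<lambda>p. w (fst p) * \<Psi> (snd (fst p) - snd (snd p))", OF _ gb] by simp
  also have "\<dots> = (\<integral>\<omega>. w (Xs i \<omega>, Ys i \<omega>) * Hy (Ys i \<omega>) \<partial>M)"
  proof (rule Bochner_Integration.integral_cong[OF refl])
    fix \<omega>
    have "(\<integral>\<omega>'. \<Psi> (Ys i \<omega> - Ys j \<omega>') \<partial>M) = Hy (Ys i \<omega>)"
      unfolding Hy_def using LAW1[OF ij(2), of "\<lambda>z. \<Psi> (Ys i \<omega> - snd z)"] by simp
    then show "(\<integral>\<omega>'. w (Xs i \<omega>, Ys i \<omega>) * \<Psi> (Ys i \<omega> - Ys j \<omega>') \<partial>M) = w (Xs i \<omega>, Ys i \<omega>) * Hy (Ys i \<omega>)"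
      by simp
  qed
  finally show ?thesis .
qed

lemma EPhi: "i \<in> {1..4} \<Longrightarrow> j \<in> {1..4} \<Longrightarrow> i \<noteq> j \<Longrightarrow> (\<integral>\<omega>. \<Phi> (Xs i \<omega> - Xs j \<omega>) \<partial>M) = mX"
  using WG[of i j "\<lambda>_. 1"] LAW1[of i "\<lambda>z. Gx (fst z)"] unfolding mX_def by simp

lemma EPsi: "i \<in> {1..4} \<Longrightarrow> j \<in> {1..4} \<Longrightarrow> i \<noteq> j \<Longrightarrow> (\<integral>\<omega>. \<Psi> (Ys i \<omega> - Ys j \<omega>) \<partial>M) = mY"
  using WH[of i j "\<lambda>_. 1"] LAW1[of i "\<lambda>z. Hy (snd z)"] unfolding mY_def by simp


lemma QQ:
  assumes ijkl: "i \<in> {1..4}" "j \<in> {1..4}" "k \<in> {1..4}" "l \<in> {1..4}"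
      "i \<noteq> j" "i \<noteq> k" "i \<noteq> l" "j \<noteq> k" "j \<noteq> l" "k \<noteq> l"
  shows "(\<integral>\<omega>. \<Phi> (Xs i \<omega> - Xs j \<omega>) * \<Psi> (Ys k \<omega> - Ys l \<omega>) \<partial>M) = mX * mY"
proof -
  have [measurable]: "Xs i \<in> borel_measurable M" "Xs j \<in> borel_measurable M" "Ys k \<in> borel_measurable M" "Ys l \<in> borel_measurable M"
    using ijkl measXYi by auto
  have "(\<integral>\<omega>. \<Phi> (Xs i \<omega> - Xs j \<omega>) * \<Psi> (Ys k \<omega> - Ys l \<omega>) \<partial>M) =
     (\<integral>\<omega>. (\<integral>\<omega>'. \<Phi> (Xs i \<omega> - Xs j \<omega>) * \<Psi> (Ys k \<omega>' - Ys l \<omega>') \<partial>M) \<partial>M)"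
    using QUAD[OF ijkl, of "\<lambda>p. \<Phi> (fst (fst (fst p)) - fst (snd (fst p))) * \<Psi> (snd (fst (snd p)) - snd (snd (snd p)))",
      OF _ PP_bnd] by simp
  also have "\<dots> = (\<integral>\<omega>. \<Phi> (Xs i \<omega> - Xs j \<omega>) * mY \<partial>M)"
    using EPsi[of k l] ijkl by simp
  also have "\<dots> = mX * mY" using EPhi[of i j] ijkl by simp
  finally show ?thesis .
qed

lemma MAIN2:
  assumes ab: "a \<in> {1..4}" "b \<in> {1..4}" "a \<noteq> b"
    and cde: "c \<in> {1..4}" "d \<in> {1..4}" "e \<in> {1..4}" "c \<noteq> d" "c \<noteq> e" "d \<noteq> e"
  shows "dcov2 \<mu> \<nu> M X Y =
     (\<integral>\<omega>. \<Phi> (Xs a \<omega> - Xs b \<omega>) * \<Psi> (Ys a \<omega> - Ys b \<omega>) \<partial>M)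
     - 2 * (\<integral>\<omega>. \<Phi> (Xs c \<omega> - Xs d \<omega>) * \<Psi> (Ys c \<omega> - Ys e \<omega>) \<partial>M) + mX * mY"
proof -
  have [measurable]: "Xs a \<in> borel_measurable M" "Xs b \<in> borel_measurable M" "Ys a \<in> borel_measurable M" "Ys b \<in> borel_measurable M"
    "Xs c \<in> borel_measurable M" "Xs d \<in> borel_measurable M" "Ys c \<in> borel_measurable M" "Ys e \<in> borel_measurable M"
    "Xs 1 \<in> borel_measurable M" "Xs 2 \<in> borel_measurable M" "Ys 3 \<in> borel_measurable M" "Ys 4 \<in> borel_measurable M"
    using ab cde measXYi by auto
  have q: "1 \<in> {1..4::nat}" "2 \<in> {1..4::nat}" "3 \<in> {1..4::nat}" "4 \<in> {1..4::nat}" by auto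
  note m = MAIN[OF ab cde q, simplified]
  note e1 = EXP[of "\<lambda>\<omega>. Xs a \<omega> - Xs b \<omega>" "\<lambda>\<omega>. Ys a \<omega> - Ys b \<omega>"]
  note e2 = EXP[of "\<lambda>\<omega>. Xs c \<omega> - Xs d \<omega>" "\<lambda>\<omega>. Ys c \<omega> - Ys e \<omega>"]
  note e3 = EXP[of "\<lambda>\<omega>. Xs 1 \<omega> - Xs 2 \<omega>" "\<lambda>\<omega>. Ys 3 \<omega> - Ys 4 \<omega>"]
  have qq: "(\<integral>\<omega>. \<Phi> (Xs 1 \<omega> - Xs 2 \<omega>) * \<Psi> (Ys 3 \<omega> - Ys 4 \<omega>) \<partial>M) = mX * mY"
    by (rule QQ) auto
  show ?thesis
    using m e1 e2 e3 qq EPhi[of a b] EPsi[of a b] EPhi[of c d] EPsi[of c e] EPhi[of 1 2] EPsi[of 3 4] ab cde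
    by (simp add: algebra_simps)
qed

lemma TH:
  assumes ij: "c \<in> {1..4}" "d \<in> {1..4}" "e \<in> {1..4}" "c \<noteq> d" "c \<noteq> e" "d \<noteq> e"
  shows "(\<integral>\<omega>. \<Phi> (Xs c \<omega> - Xs d \<omega>) * \<Psi> (Ys c \<omega> - Ys e \<omega>) \<partial>M) = (\<integral>\<omega>. \<Phi> (Xs c \<omega> - Xs d \<omega>) * Hy (Ys c \<omega>) \<partial>M)"
proof -
  have "(\<integral>\<omega>. \<Phi> (Xs c \<omega> - Xs d \<omega>) * \<Psi> (Ys c \<omega> - Ys e \<omega>) \<partial>M) =
     (\<integral>\<omega>. (\<integral>\<omega>'. \<Phi> (Xs c \<omega> - Xs d \<omega>) * \<Psi> (Ys c \<omega> - Ys e \<omega>') \<partial>M) \<partial>M)"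
    using TRIP[OF ij, of "\<lambda>p. \<Phi> (fst (fst (fst p)) - fst (snd (fst p))) * \<Psi> (snd (fst (fst p)) - snd (snd p))",
      OF _ PP_bnd] by simp
  also have "\<dots> = (\<integral>\<omega>. \<Phi> (Xs c \<omega> - Xs d \<omega>) * Hy (Ys c \<omega>) \<partial>M)"
  proof (rule Bochner_Integration.integral_cong[OF refl])
    fix \<omega>
    have "(\<integral>\<omega>'. \<Psi> (Ys c \<omega> - Ys e \<omega>') \<partial>M) = Hy (Ys c \<omega>)"
      unfolding Hy_def using LAW1[OF ij(3), of "\<lambda>z. \<Psi> (Ys c \<omega> - snd z)"] by simp
    then show "(\<integral>\<omega>'. \<Phi> (Xs c \<omega> - Xs d \<omega>) * \<Psi> (Ys c \<omega> - Ys e \<omega>') \<partial>M) = \<Phi> (Xs c \<omega> - Xs d \<omega>) * Hy (Ys c \<omega>)"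
      by simp
  qed
  finally show ?thesis .
qed

lemma TG:
  assumes ij: "c \<in> {1..4}" "d \<in> {1..4}" "e \<in> {1..4}" "c \<noteq> d" "c \<noteq> e" "d \<noteq> e"
  shows "(\<integral>\<omega>. \<Phi> (Xs c \<omega> - Xs e \<omega>) * \<Psi> (Ys c \<omega> - Ys d \<omega>) \<partial>M) = (\<integral>\<omega>. Gx (Xs c \<omega>) * \<Psi> (Ys c \<omega> - Ys d \<omega>) \<partial>M)"
proof -
  have "(\<integral>\<omega>. \<Phi> (Xs c \<omega> - Xs e \<omega>) * \<Psi> (Ys c \<omega> - Ys d \<omega>) \<partial>M) =
     (\<integral>\<omega>. (\<integral>\<omega>'. \<Phi> (Xs c \<omega> - Xs e \<omega>') * \<Psi> (Ys c \<omega> - Ys d \<omega>) \<partial>M) \<partial>M)"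
    using TRIP[OF ij, of "\<lambda>p. \<Phi> (fst (fst (fst p)) - fst (snd p)) * \<Psi> (snd (fst (fst p)) - snd (snd (fst p)))",
      OF _ PP_bnd] by simp
  also have "\<dots> = (\<integral>\<omega>. Gx (Xs c \<omega>) * \<Psi> (Ys c \<omega> - Ys d \<omega>) \<partial>M)"
  proof (rule Bochner_Integration.integral_cong[OF refl])
    fix \<omega>
    have "(\<integral>\<omega>'. \<Phi> (Xs c \<omega> - Xs e \<omega>') \<partial>M) = Gx (Xs c \<omega>)"
      unfolding Gx_def using LAW1[OF ij(3), of "\<lambda>z. \<Phi> (Xs c \<omega> - fst z)"] by simp
    then show "(\<integral>\<omega>'. \<Phi> (Xs c \<omega> - Xs e \<omega>') * \<Psi> (Ys c \<omega> - Ys d \<omega>) \<partial>M) = Gx (Xs c \<omega>) * \<Psi> (Ys c \<omega> - Ys d \<omega>)"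
      by simp
  qed
  finally show ?thesis .
qed

lemma GH_bnd: "\<bar>Gx x * Hy y\<bar> \<le> 2 * cm * (2 * cn)"
  unfolding abs_mult by (rule mult_mono) (use Gx_bnd Hy_bnd in auto)

lemma GH:
  assumes ij: "i \<in> {1..4}" "j \<in> {1..4}" "i \<noteq> j"
  shows "(\<integral>\<omega>. Gx (Xs i \<omega>) * Hy (Ys j \<omega>) \<partial>M) = mX * mY"
proof -
  have "(\<integral>\<omega>. Gx (Xs i \<omega>) * Hy (Ys j \<omega>) \<partial>M) = (\<integral>\<omega>. (\<integral>\<omega>'. Gx (Xs i \<omega>) * Hy (Ys j \<omega>') \<partial>M) \<partial>M)"
    using PAIR[OF ij, of "\<lambda>p. Gx (fst (fst p)) * Hy (snd (snd p))", OF _ GH_bnd] by simp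
  also have "\<dots> = (\<integral>\<omega>. Gx (Xs i \<omega>) * mY \<partial>M)"
    using LAW1[OF ij(2), of "\<lambda>z. Hy (snd z)"] unfolding mY_def by simp
  also have "\<dots> = mX * mY"
    using LAW1[OF ij(1), of "\<lambda>z. Gx (fst z)"] unfolding mX_def by simp
  finally show ?thesis .
qed


lemma sub_vimage:
  fixes f :: "'w \<Rightarrow> 'd::euclidean_space"
  assumes f: "f \<in> borel_measurable M"
  shows "subalgebra M (vimage_algebra (space M) f borel)" "sigma_finite_subalgebra M (vimage_algebra (space M) f borel)"
proof -
  show sub: "subalgebra M (vimage_algebra (space M) f borel)"
    unfolding subalgebra_def using sets_image_in_sets[OF refl f] by simp
  show "sigma_finite_subalgebra M (vimage_algebra (space M) f borel)"
    by (intro finite_measure_subalgebra_is_sigma_finite finite_measure_subalgebra.intro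
        finite_measure_subalgebra_axioms.intro sub) unfold_locales
qed

lemma CEX:
  assumes ij: "i \<in> {1..4}" "j \<in> {1..4}" "i \<noteq> j"
  shows "AE \<omega> in M. real_cond_exp M (vimage_algebra (space M) (Xs i) borel) (\<lambda>\<omega>'. \<Phi> (Xs i \<omega>' - Xs j \<omega>')) \<omega> = Gx (Xs i \<omega>)"
    "real_cond_exp M (vimage_algebra (space M) (Xs i) borel) (\<lambda>\<omega>'. \<Phi> (Xs i \<omega>' - Xs j \<omega>')) \<in> borel_measurable M"
proof -
  have [measurable]: "Xs i \<in> borel_measurable M" "Xs j \<in> borel_measurable M" using ij measXYi by auto
  let ?F = "vimage_algebra (space M) (Xs i) borel"
  note sv = sub_vimage[OF measXYi(1)[OF ij(1)]]
  interpret S: sigma_finite_subalgebra M ?F using sv by simp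
  show "real_cond_exp M ?F (\<lambda>\<omega>'. \<Phi> (Xs i \<omega>' - Xs j \<omega>')) \<in> borel_measurable M"
    by (rule borel_measurable_cond_exp2)
  show "AE \<omega> in M. real_cond_exp M ?F (\<lambda>\<omega>'. \<Phi> (Xs i \<omega>' - Xs j \<omega>')) \<omega> = Gx (Xs i \<omega>)"
  proof (rule S.real_cond_exp_charact)
    fix A assume "A \<in> sets ?F"
    then obtain B where B: "B \<in> sets borel" and A: "A = Xs i -` B \<inter> space M"
      using sets_vimage_algebra2[of "Xs i" "space M" borel] by auto
    have "(\<integral>x\<in>A. \<Phi> (Xs i x - Xs j x) \<partial>M) = (\<integral>\<omega>. indicator B (fst (Xs i \<omega>, Ys i \<omega>)) * \<Phi> (Xs i \<omega> - Xs j \<omega>) \<partial>M)"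
      unfolding set_lebesgue_integral_def A by (rule Bochner_Integration.integral_cong) (auto split: split_indicator)
    also have "\<dots> = (\<integral>\<omega>. indicator B (fst (Xs i \<omega>, Ys i \<omega>)) * Gx (Xs i \<omega>) \<partial>M)"
      by (rule WG[OF ij, of "\<lambda>z. indicator B (fst z)"]) (use B in \<open>auto split: split_indicator\<close>)
    also have "\<dots> = (\<integral>x\<in>A. Gx (Xs i x) \<partial>M)"
      unfolding set_lebesgue_integral_def A by (rule Bochner_Integration.integral_cong) (auto split: split_indicator)
    finally show "(\<integral>x\<in>A. \<Phi> (Xs i x - Xs j x) \<partial>M) = (\<integral>x\<in>A. Gx (Xs i x) \<partial>M)" .
  next
    show "integrable M (\<lambda>x. \<Phi> (Xs i x - Xs j x))" by (rule int_Phi) measurable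
    show "integrable M (\<lambda>x. Gx (Xs i x))" by (rule bnd_integrable[where c="2 * cm"]) (auto simp: Gx_bnd)
    show "(\<lambda>x. Gx (Xs i x)) \<in> borel_measurable ?F"
      by (rule measurable_compose[OF measurable_vimage_algebra1 Gx_meas]) simp
  qed
qed

lemma CEY:
  assumes ij: "i \<in> {1..4}" "j \<in> {1..4}" "i \<noteq> j"
  shows "AE \<omega> in M. real_cond_exp M (vimage_algebra (space M) (Ys i) borel) (\<lambda>\<omega>'. \<Psi> (Ys i \<omega>' - Ys j \<omega>')) \<omega> = Hy (Ys i \<omega>)"
    "real_cond_exp M (vimage_algebra (space M) (Ys i) borel) (\<lambda>\<omega>'. \<Psi> (Ys i \<omega>' - Ys j \<omega>')) \<in> borel_measurable M"
proof -
  have [measurable]: "Ys i \<in> borel_measurable M" "Ys j \<in> borel_measurable M" using ij measXYi by auto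
  let ?F = "vimage_algebra (space M) (Ys i) borel"
  note sv = sub_vimage[OF measXYi(2)[OF ij(1)]]
  interpret S: sigma_finite_subalgebra M ?F using sv by simp
  show "real_cond_exp M ?F (\<lambda>\<omega>'. \<Psi> (Ys i \<omega>' - Ys j \<omega>')) \<in> borel_measurable M"
    by (rule borel_measurable_cond_exp2)
  show "AE \<omega> in M. real_cond_exp M ?F (\<lambda>\<omega>'. \<Psi> (Ys i \<omega>' - Ys j \<omega>')) \<omega> = Hy (Ys i \<omega>)"
  proof (rule S.real_cond_exp_charact)
    fix A assume "A \<in> sets ?F"
    then obtain B where B: "B \<in> sets borel" and A: "A = Ys i -` B \<inter> space M"
      using sets_vimage_algebra2[of "Ys i" "space M" borel] by auto
    have "(\<integral>x\<in>A. \<Psi> (Ys i x - Ys j x) \<partial>M) = (\<integral>\<omega>. indicator B (snd (Xs i \<omega>, Ys i \<omega>)) * \<Psi> (Ys i \<omega> - Ys j \<omega>) \<partial>M)"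
      unfolding set_lebesgue_integral_def A by (rule Bochner_Integration.integral_cong) (auto split: split_indicator)
    also have "\<dots> = (\<integral>\<omega>. indicator B (snd (Xs i \<omega>, Ys i \<omega>)) * Hy (Ys i \<omega>) \<partial>M)"
      by (rule WH[OF ij, of "\<lambda>z. indicator B (snd z)"]) (use B in \<open>auto split: split_indicator\<close>)
    also have "\<dots> = (\<integral>x\<in>A. Hy (Ys i x) \<partial>M)"
      unfolding set_lebesgue_integral_def A by (rule Bochner_Integration.integral_cong) (auto split: split_indicator)
    finally show "(\<integral>x\<in>A. \<Psi> (Ys i x - Ys j x) \<partial>M) = (\<integral>x\<in>A. Hy (Ys i x) \<partial>M)" .
  next
    show "integrable M (\<lambda>x. \<Psi> (Ys i x - Ys j x))" by (rule int_Psi) measurable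
    show "integrable M (\<lambda>x. Hy (Ys i x))" by (rule bnd_integrable[where c="2 * cn"]) (auto simp: Hy_bnd)
    show "(\<lambda>x. Hy (Ys i x)) \<in> borel_measurable ?F"
      by (rule measurable_compose[OF measurable_vimage_algebra1 Hy_meas]) simp
  qed
qed


lemma V1: "dcov2 \<mu> \<nu> M X Y =
           (\<integral>\<omega>. \<Phi> (Xs 1 \<omega> - Xs 4 \<omega>) * \<Psi> (Ys 1 \<omega> - Ys 4 \<omega>) \<partial>M)
           - 2 * (\<integral>\<omega>. \<Phi> (Xs 1 \<omega> - Xs 2 \<omega>) * \<Psi> (Ys 1 \<omega> - Ys 3 \<omega>) \<partial>M)
           + (\<integral>\<omega>. \<Phi> (Xs 1 \<omega> - Xs 2 \<omega>) \<partial>M) * (\<integral>\<omega>. \<Psi> (Ys 3 \<omega> - Ys 4 \<omega>) \<partial>M)"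
  using MAIN2[of 1 4 1 2 3] EPhi[of 1 2] EPsi[of 3 4] by simp

lemma V2: "dcov2 \<mu> \<nu> M X Y =
           (\<integral>\<omega>. \<Phi> (Xs 1 \<omega> - Xs 4 \<omega>) *
               (\<Psi> (Ys 1 \<omega> - Ys 4 \<omega>) - 2 * \<Psi> (Ys 1 \<omega> - Ys 3 \<omega>) + \<Psi> (Ys 2 \<omega> - Ys 3 \<omega>)) \<partial>M)"
proof -
  have e: "\<Phi> (Xs 1 \<omega> - Xs 4 \<omega>) * (\<Psi> (Ys 1 \<omega> - Ys 4 \<omega>) - 2 * \<Psi> (Ys 1 \<omega> - Ys 3 \<omega>) + \<Psi> (Ys 2 \<omega> - Ys 3 \<omega>)) =
    \<Phi> (Xs 1 \<omega> - Xs 4 \<omega>) * \<Psi> (Ys 1 \<omega> - Ys 4 \<omega>) - 2 * (\<Phi> (Xs 1 \<omega> - Xs 4 \<omega>) * \<Psi> (Ys 1 \<omega> - Ys 3 \<omega>))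
    + \<Phi> (Xs 1 \<omega> - Xs 4 \<omega>) * \<Psi> (Ys 2 \<omega> - Ys 3 \<omega>)" for \<omega>
    by (simp add: algebra_simps)
  have i: "integrable M (\<lambda>\<omega>. \<Phi> (Xs 1 \<omega> - Xs 4 \<omega>) * \<Psi> (Ys 1 \<omega> - Ys 4 \<omega>))"
    "integrable M (\<lambda>\<omega>. \<Phi> (Xs 1 \<omega> - Xs 4 \<omega>) * \<Psi> (Ys 1 \<omega> - Ys 3 \<omega>))"
    "integrable M (\<lambda>\<omega>. \<Phi> (Xs 1 \<omega> - Xs 4 \<omega>) * \<Psi> (Ys 2 \<omega> - Ys 3 \<omega>))"
    by (rule int_PP; measurable)+
  show ?thesis
    unfolding e using i MAIN2[of 1 4 1 4 3] QQ[of 1 4 2 3] by simp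
qed

lemma V3: "dcov2 \<mu> \<nu> M X Y =
           (\<integral>\<omega>. (\<Phi> (Xs 1 \<omega> - Xs 4 \<omega>) - \<Phi> (Xs 4 \<omega> - Xs 2 \<omega>)) *
               (\<Psi> (Ys 4 \<omega> - Ys 1 \<omega>) - \<Psi> (Ys 1 \<omega> - Ys 3 \<omega>)) \<partial>M)"
proof -
  have e: "(\<Phi> (Xs 1 \<omega> - Xs 4 \<omega>) - \<Phi> (Xs 4 \<omega> - Xs 2 \<omega>)) * (\<Psi> (Ys 4 \<omega> - Ys 1 \<omega>) - \<Psi> (Ys 1 \<omega> - Ys 3 \<omega>)) =
    \<Phi> (Xs 1 \<omega> - Xs 4 \<omega>) * \<Psi> (Ys 1 \<omega> - Ys 4 \<omega>) - \<Phi> (Xs 1 \<omega> - Xs 4 \<omega>) * \<Psi> (Ys 1 \<omega> - Ys 3 \<omega>)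
    - \<Phi> (Xs 4 \<omega> - Xs 2 \<omega>) * \<Psi> (Ys 4 \<omega> - Ys 1 \<omega>) + \<Phi> (Xs 4 \<omega> - Xs 2 \<omega>) * \<Psi> (Ys 1 \<omega> - Ys 3 \<omega>)" for \<omega>
    using Psi_even[of "Ys 4 \<omega>" "Ys 1 \<omega>"] by (simp add: algebra_simps)
  have i: "integrable M (\<lambda>\<omega>. \<Phi> (Xs 1 \<omega> - Xs 4 \<omega>) * \<Psi> (Ys 1 \<omega> - Ys 4 \<omega>))"
    "integrable M (\<lambda>\<omega>. \<Phi> (Xs 1 \<omega> - Xs 4 \<omega>) * \<Psi> (Ys 1 \<omega> - Ys 3 \<omega>))"
    "integrable M (\<lambda>\<omega>. \<Phi> (Xs 4 \<omega> - Xs 2 \<omega>) * \<Psi> (Ys 4 \<omega> - Ys 1 \<omega>))"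
    "integrable M (\<lambda>\<omega>. \<Phi> (Xs 4 \<omega> - Xs 2 \<omega>) * \<Psi> (Ys 1 \<omega> - Ys 3 \<omega>))"
    by (rule int_PP; measurable)+
  show ?thesis
    unfolding e using i MAIN2[of 1 4 1 4 3] MAIN2[of 1 4 4 2 1] QQ[of 4 2 1 3] by simp
qed

lemma V4: "dcov2 \<mu> \<nu> M X Y =
           (\<integral>\<omega>. (\<Phi> (Xs 1 \<omega> - Xs 4 \<omega>)
                   - real_cond_exp M (vimage_algebra (space M) (Xs 4) borel)
                       (\<lambda>\<omega>'. \<Phi> (Xs 4 \<omega>' - Xs 1 \<omega>')) \<omega>) *
               (\<Psi> (Ys 4 \<omega> - Ys 1 \<omega>)
                   - real_cond_exp M (vimage_algebra (space M) (Ys 1) borel)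
                       (\<lambda>\<omega>'. \<Psi> (Ys 1 \<omega>' - Ys 4 \<omega>')) \<omega>) \<partial>M)"
  (is "_ = integral\<^sup>L M ?f")
proof -
  have q: "4 \<in> {1..4::nat}" "1 \<in> {1..4::nat}" "(4::nat) \<noteq> 1" "(1::nat) \<noteq> 4" by auto
  note cx = CEX[OF q(1) q(2) q(3)] and cy = CEY[OF q(2) q(1) q(4)]
  have m1[measurable]: "real_cond_exp M (vimage_algebra (space M) (Xs 4) borel) (\<lambda>\<omega>'. \<Phi> (Xs 4 \<omega>' - Xs 1 \<omega>')) \<in> borel_measurable M"
    using cx by simp
  have m2[measurable]: "real_cond_exp M (vimage_algebra (space M) (Ys 1) borel) (\<lambda>\<omega>'. \<Psi> (Ys 1 \<omega>' - Ys 4 \<omega>')) \<in> borel_measurable M"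
    using cy by simp
  let ?g = "\<lambda>\<omega>. (\<Phi> (Xs 1 \<omega> - Xs 4 \<omega>) - Gx (Xs 4 \<omega>)) * (\<Psi> (Ys 4 \<omega> - Ys 1 \<omega>) - Hy (Ys 1 \<omega>))"
  have "integral\<^sup>L M ?f = integral\<^sup>L M ?g"
  proof (rule integral_cong_AE)
    show "?f \<in> borel_measurable M" by measurable
    show "?g \<in> borel_measurable M" by measurable
    show "AE \<omega> in M. ?f \<omega> = ?g \<omega>" using cx(1) cy(1) by eventually_elim simp
  qed
  also have "\<dots> = (\<integral>\<omega>. \<Phi> (Xs 1 \<omega> - Xs 4 \<omega>) * \<Psi> (Ys 1 \<omega> - Ys 4 \<omega>) \<partial>M) - (\<integral>\<omega>. \<Phi> (Xs 1 \<omega> - Xs 4 \<omega>) * Hy (Ys 1 \<omega>) \<partial>M)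
      - (\<integral>\<omega>. Gx (Xs 4 \<omega>) * \<Psi> (Ys 4 \<omega> - Ys 1 \<omega>) \<partial>M) + (\<integral>\<omega>. Gx (Xs 4 \<omega>) * Hy (Ys 1 \<omega>) \<partial>M)"
  proof -
    have e: "?g \<omega> = \<Phi> (Xs 1 \<omega> - Xs 4 \<omega>) * \<Psi> (Ys 1 \<omega> - Ys 4 \<omega>) - \<Phi> (Xs 1 \<omega> - Xs 4 \<omega>) * Hy (Ys 1 \<omega>)
      - Gx (Xs 4 \<omega>) * \<Psi> (Ys 4 \<omega> - Ys 1 \<omega>) + Gx (Xs 4 \<omega>) * Hy (Ys 1 \<omega>)" for \<omega>
      using Psi_even[of "Ys 4 \<omega>" "Ys 1 \<omega>"] by (simp add: algebra_simps)
    have b1: "\<bar>\<Phi> x * Hy y\<bar> \<le> 2 * cm * (2 * cn)" for x y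
      unfolding abs_mult by (rule mult_mono) (use Phi_bnd Hy_bnd in auto)
    have b2: "\<bar>Gx x * \<Psi> y\<bar> \<le> 2 * cm * (2 * cn)" for x y
      unfolding abs_mult by (rule mult_mono) (use Gx_bnd Psi_bnd in auto)
    have i: "integrable M (\<lambda>\<omega>. \<Phi> (Xs 1 \<omega> - Xs 4 \<omega>) * \<Psi> (Ys 1 \<omega> - Ys 4 \<omega>))"
      "integrable M (\<lambda>\<omega>. \<Phi> (Xs 1 \<omega> - Xs 4 \<omega>) * Hy (Ys 1 \<omega>))"
      "integrable M (\<lambda>\<omega>. Gx (Xs 4 \<omega>) * \<Psi> (Ys 4 \<omega> - Ys 1 \<omega>))"
      "integrable M (\<lambda>\<omega>. Gx (Xs 4 \<omega>) * Hy (Ys 1 \<omega>))"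
    proof -
      show "integrable M (\<lambda>\<omega>. \<Phi> (Xs 1 \<omega> - Xs 4 \<omega>) * \<Psi> (Ys 1 \<omega> - Ys 4 \<omega>))"
        by (rule int_PP; measurable)
      show "integrable M (\<lambda>\<omega>. \<Phi> (Xs 1 \<omega> - Xs 4 \<omega>) * Hy (Ys 1 \<omega>))"
        by (rule bnd_integrable[where c="2 * cm * (2 * cn)"]) (measurable, unfold real_norm_def, rule b1)
      show "integrable M (\<lambda>\<omega>. Gx (Xs 4 \<omega>) * \<Psi> (Ys 4 \<omega> - Ys 1 \<omega>))"
        by (rule bnd_integrable[where c="2 * cm * (2 * cn)"]) (measurable, unfold real_norm_def, rule b2)
      show "integrable M (\<lambda>\<omega>. Gx (Xs 4 \<omega>) * Hy (Ys 1 \<omega>))"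
        by (rule bnd_integrable[where c="2 * cm * (2 * cn)"]) (measurable, unfold real_norm_def, rule GH_bnd)
    qed
    show ?thesis unfolding e using i by simp
  qed
  also have "\<dots> = dcov2 \<mu> \<nu> M X Y"
    using MAIN2[of 1 4 1 4 2] MAIN2[of 1 4 4 2 1] TH[of 1 4 2] TG[of 4 1 2] GH[of 4 1] by simp
  finally show ?thesis by simp
qed

end

theorem corollary3p4:
  fixes M :: "'w measure"
    and X :: "'w \<Rightarrow> real ^ 'm" and Y :: "'w \<Rightarrow> real ^ 'n"
    and Xs :: "nat \<Rightarrow> 'w \<Rightarrow> real ^ 'm" and Ys :: "nat \<Rightarrow> 'w \<Rightarrow> real ^ 'n"
    and \<mu> :: "(real ^ 'm) measure" and \<nu> :: "(real ^ 'n) measure"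
    and \<Phi> :: "real ^ 'm \<Rightarrow> real" and \<Psi> :: "real ^ 'n \<Rightarrow> real"
  assumes P: "prob_space M"
    and X: "X \<in> borel_measurable M" and Y: "Y \<in> borel_measurable M"
    and XsYs: "\<And>i. i \<in> {1..4} \<Longrightarrow> Xs i \<in> borel_measurable M \<and> Ys i \<in> borel_measurable M"
    and indep: "prob_space.indep_vars M (\<lambda>_. borel \<Otimes>\<^sub>M borel) (\<lambda>i \<omega>. (Xs i \<omega>, Ys i \<omega>)) {1..4}"
    and ident: "\<And>i. i \<in> {1..4} \<Longrightarrow>
        distr M (borel \<Otimes>\<^sub>M borel) (\<lambda>\<omega>. (Xs i \<omega>, Ys i \<omega>)) = distr M (borel \<Otimes>\<^sub>M borel) (\<lambda>\<omega>. (X \<omega>, Y \<omega>))"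
    and mu: "finite_sym_levy_full \<mu>" and nu: "finite_sym_levy_full \<nu>"
    and Phi: "\<Phi> = levy_cf_exp \<mu>" and Psi: "\<Psi> = levy_cf_exp \<nu>"
  shows "dcov2 \<mu> \<nu> M X Y =
           (\<integral>\<omega>. \<Phi> (Xs 1 \<omega> - Xs 4 \<omega>) * \<Psi> (Ys 1 \<omega> - Ys 4 \<omega>) \<partial>M)
           - 2 * (\<integral>\<omega>. \<Phi> (Xs 1 \<omega> - Xs 2 \<omega>) * \<Psi> (Ys 1 \<omega> - Ys 3 \<omega>) \<partial>M)
           + (\<integral>\<omega>. \<Phi> (Xs 1 \<omega> - Xs 2 \<omega>) \<partial>M) * (\<integral>\<omega>. \<Psi> (Ys 3 \<omega> - Ys 4 \<omega>) \<partial>M)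
       \<and> dcov2 \<mu> \<nu> M X Y =
           (\<integral>\<omega>. \<Phi> (Xs 1 \<omega> - Xs 4 \<omega>) *
               (\<Psi> (Ys 1 \<omega> - Ys 4 \<omega>) - 2 * \<Psi> (Ys 1 \<omega> - Ys 3 \<omega>) + \<Psi> (Ys 2 \<omega> - Ys 3 \<omega>)) \<partial>M)
       \<and> dcov2 \<mu> \<nu> M X Y =
           (\<integral>\<omega>. (\<Phi> (Xs 1 \<omega> - Xs 4 \<omega>) - \<Phi> (Xs 4 \<omega> - Xs 2 \<omega>)) *
               (\<Psi> (Ys 4 \<omega> - Ys 1 \<omega>) - \<Psi> (Ys 1 \<omega> - Ys 3 \<omega>)) \<partial>M)
       \<and> dcov2 \<mu> \<nu> M X Y =
           (\<integral>\<omega>. (\<Phi> (Xs 1 \<omega> - Xs 4 \<omega>)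
                   - real_cond_exp M (vimage_algebra (space M) (Xs 4) borel)
                       (\<lambda>\<omega>'. \<Phi> (Xs 4 \<omega>' - Xs 1 \<omega>')) \<omega>) *
               (\<Psi> (Ys 4 \<omega> - Ys 1 \<omega>)
                   - real_cond_exp M (vimage_algebra (space M) (Ys 1) borel)
                       (\<lambda>\<omega>'. \<Psi> (Ys 1 \<omega>' - Ys 4 \<omega>')) \<omega>) \<partial>M)"
proof -
  interpret D: dc M X Y Xs Ys \<mu> \<nu> \<Phi> \<Psi>
    by (rule dc.intro[OF P], unfold_locales) (use assms in auto)
  show ?thesis using D.V1 D.V2 D.V3 D.V4 by blast
qed

end
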